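(* Let $\Phi=\{\phi_j\}$ be an orthonormal basis of $L^2([0,1],\mu)$, let $A>0$, $k>1/2$, and let $C\ge A^2/(2k-1)$. Then $$\mathcal{E}_k(\Phi,A)\subseteq\Theta_k(\Phi,A,C)\subseteq\mathcal{A}_k(\Phi,A,C).$$
   Context: Each $f\in L^2([0,1],\mu)$ is written $f=\sum_j\theta_j\phi_j$. $\mathcal{E}_k(\Phi,A)=\{f:|\theta_j|\le Aj^{-k}\ \forall j\ge1\}$. $\Theta_k(\Phi,A,C)$ is the set of $f$ whose coefficients' non-increasing rearrangement by absolute value $\{\theta_{(j)}\}$ satisfies $|\theta_{(j)}|\le Aj^{-k}$ for all $j\ge1$ and with $\sum_{j=J+1}^\infty\theta_j^2\le CJ^{-2k+1}$ for all $J\ge1$. $\mathcal{A}_k(\Phi,A,C)=\{f:|\theta_1|\le A,\ \sum_{j=J+1}^\infty\theta_j^2\le CJ^{-2k+1}\ \forall J\ge1\}$. *)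

theory Defs
  imports "HOL-Analysis.Analysis"
begin

text \<open>Real L^2([0,1],mu) rendered as square-integrable real functions (representatives).
  Basis functions and coefficients are indexed from 1.\<close>

definition L2 :: "real measure \<Rightarrow> (real \<Rightarrow> real) set" where
  "L2 M = {f. f \<in> borel_measurable M \<and> integrable M (\<lambda>x. (f x)\<^sup>2)}"

definition coeff :: "real measure \<Rightarrow> (nat \<Rightarrow> real \<Rightarrow> real) \<Rightarrow> (real \<Rightarrow> real) \<Rightarrow> nat \<Rightarrow> real" where
  "coeff M \<phi> f j = (LINT x|M. f x * \<phi> j x)"

definition orthonormal_basis_L2 :: "real measure \<Rightarrow> (nat \<Rightarrow> real \<Rightarrow> real) \<Rightarrow> bool" where
  "orthonormal_basis_L2 M \<phi> \<longleftrightarrow>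
     (\<forall>j\<ge>1. \<phi> j \<in> L2 M) \<and>
     (\<forall>i\<ge>1. \<forall>j\<ge>1. (LINT x|M. \<phi> i x * \<phi> j x) = (if i = j then 1 else 0)) \<and>
     (\<forall>f\<in>L2 M. (\<lambda>n. LINT x|M. (f x - (\<Sum>j=1..n. coeff M \<phi> f j * \<phi> j x))\<^sup>2) \<longlonglongrightarrow> 0)"

text \<open>Absolute value of the j-th term (j >= 1) of the non-increasing rearrangement of
  (|theta_i|)_{i>=1}, via the distribution function.\<close>
definition rearr :: "(nat \<Rightarrow> real) \<Rightarrow> nat \<Rightarrow> real" where
  "rearr \<theta> j = Inf {t. 0 \<le> t \<and> finite {i. 1 \<le> i \<and> t < \<bar>\<theta> i\<bar>}
                        \<and> card {i. 1 \<le> i \<and> t < \<bar>\<theta> i\<bar>} < j}"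

definition tail_sq :: "(nat \<Rightarrow> real) \<Rightarrow> nat \<Rightarrow> real" where
  "tail_sq \<theta> J = (\<Sum>\<^sub>\<infinity>j\<in>{J+1..}. (\<theta> j)\<^sup>2)"

definition Ecal :: "real measure \<Rightarrow> (nat \<Rightarrow> real \<Rightarrow> real) \<Rightarrow> real \<Rightarrow> real \<Rightarrow> (real \<Rightarrow> real) set" where
  "Ecal M \<phi> k A = {f \<in> L2 M. \<forall>j\<ge>1. \<bar>coeff M \<phi> f j\<bar> \<le> A * real j powr (-k)}"

definition Theta :: "real measure \<Rightarrow> (nat \<Rightarrow> real \<Rightarrow> real) \<Rightarrow> real \<Rightarrow> real \<Rightarrow> real \<Rightarrow> (real \<Rightarrow> real) set" where
  "Theta M \<phi> k A C = {f \<in> L2 M.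
      (\<forall>j\<ge>1. rearr (coeff M \<phi> f) j \<le> A * real j powr (-k)) \<and>
      (\<forall>J\<ge>1. tail_sq (coeff M \<phi> f) J \<le> C * real J powr (-2*k+1))}"

definition Acal :: "real measure \<Rightarrow> (nat \<Rightarrow> real \<Rightarrow> real) \<Rightarrow> real \<Rightarrow> real \<Rightarrow> real \<Rightarrow> (real \<Rightarrow> real) set" where
  "Acal M \<phi> k A C = {f \<in> L2 M.
      \<bar>coeff M \<phi> f 1\<bar> \<le> A \<and>
      (\<forall>J\<ge>1. tail_sq (coeff M \<phi> f) J \<le> C * real J powr (-2*k+1))}"

end

theory Submission
  imports Defs
begin

lemma key:
  fixes x p :: real assumes "x > 1" "p > 0"
  shows "p * x powr (-(p+1)) \<le> (x-1) powr (-p) - x powr (-p)"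
proof -
  have "\<exists>z. x-1 < z \<and> z < x \<and> (\<lambda>y. y powr (-p)) x - (\<lambda>y. y powr (-p)) (x-1) = (x - (x-1)) * ((-p) * z powr (-p-1))"
  proof (rule MVT2)
    show "x - 1 < x" by simp
    fix y assume "x - 1 \<le> y" "y \<le> x"
    then have "y > 0" using assms by auto
    from has_real_derivative_powr[OF this, of "-p"]
    show "((\<lambda>y. y powr (-p)) has_real_derivative ((-p) * y powr (-p-1))) (at y)" by simp
  qed
  then obtain z where z: "x-1<z" "z<x" "x powr (-p) - (x-1) powr (-p) = (-p) * z powr (-p-1)" by auto
  have "x powr (-p-1) \<le> z powr (-p-1)"
    using z assms by (intro powr_mono2') auto
  then have "p * x powr (-p-1) \<le> p * z powr (-p-1)" using assms by (simp add: mult_left_mono)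
  then show ?thesis using z(3) by simp
qed

lemma tail_bound:
  fixes \<theta> :: "nat \<Rightarrow> real" and A k :: real and J :: nat
  assumes "A > 0" "k > 1/2" "J \<ge> 1" "\<And>j. j \<ge> 1 \<Longrightarrow> \<bar>\<theta> j\<bar> \<le> A * real j powr (-k)"
  shows "(\<Sum>\<^sub>\<infinity>j\<in>{J+1..}. (\<theta> j)\<^sup>2) \<le> A\<^sup>2/(2*k-1) * real J powr (-2*k+1)"
proof -
  define p where "p = 2*k-1"
  have p: "p > 0" using assms p_def by simp
  define F where "F n = real (n+J) powr (-p)" for n
  have "filterlim (\<lambda>n. real (n+J)) at_top sequentially"
    by (intro filterlim_compose[OF filterlim_real_sequentially] filterlim_add_const_nat_at_top)
  then have F0: "F \<longlonglongrightarrow> 0" unfolding F_def using p by (intro tendsto_neg_powr) auto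
  define c where "c j = A\<^sup>2/p * ((real j - 1) powr (-p) - real j powr (-p))" for j :: nat
  have ck: "(\<theta> j)\<^sup>2 \<le> c j" if "j \<ge> J+1" for j
  proof -
    have j1: "real j > 1" using that assms by simp
    have "\<bar>\<theta> j\<bar> \<le> A * real j powr (-k)" using assms(4) that by simp
    then have "(\<theta> j)\<^sup>2 \<le> (A * real j powr (-k))\<^sup>2"
      by (metis abs_ge_zero power2_abs power_mono)
    also have "\<dots> = A\<^sup>2 * real j powr (-(p+1))"
    proof -
      have "(real j powr (-k))\<^sup>2 = real j powr (-k) * real j powr (-k)" by (simp add: power2_eq_square)
      also have "\<dots> = real j powr (-(p+1))" unfolding powr_add[symmetric] p_def by simp
      finally show ?thesis by (simp add: power_mult_distrib)
    qed
    also have "\<dots> = A\<^sup>2/p * (p * real j powr (-(p+1)))" using p by simp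
    also have "\<dots> \<le> c j" unfolding c_def
      using key[OF j1 p] p by (intro mult_left_mono) auto
    finally show ?thesis .
  qed
  have s0: "(\<lambda>n. A\<^sup>2/p * (F n - F (Suc n))) sums (A\<^sup>2/p * (F 0 - 0))"
    by (intro sums_mult telescope_sums' F0)
  have eq: "A\<^sup>2/p * (F n - F (Suc n)) = c (n+J+1)" for n
  proof -
    have 1: "F (Suc n) = real (n+J+1) powr (-p)" unfolding F_def by (simp add: add.commute)
    have 2: "real (n+J+1) - 1 = real (n+J)" by simp
    show ?thesis unfolding c_def 1 2 by (simp only: F_def)
  qed
  have F00: "F 0 = real J powr (-p)" unfolding F_def by simp
  from s0 have s: "(\<lambda>n. c (n+J+1)) sums (A\<^sup>2/p * real J powr (-p))"
    unfolding eq F00 by simp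
  have cnn: "c j \<ge> 0" if "j \<ge> J+1" for j using ck[OF that] by (meson order_trans zero_le_power2)
  have hU: "((\<lambda>n. c (n+J+1)) has_sum (A\<^sup>2/p * real J powr (-p))) UNIV"
    using s by (rule sums_nonneg_imp_has_sum) (rule cnn, simp)
  have bij: "bij_betw (\<lambda>n. n+J+1) UNIV {J+1..}"
    by (rule bij_betw_byWitness[where f'="\<lambda>m. m - (J+1)"]) auto
  have hc: "(c has_sum (A\<^sup>2/p * real J powr (-p))) {J+1..}"
    using has_sum_reindex_bij_betw[OF bij, of c] hU by (rule iffD1)
  have hcs: "c summable_on {J+1..}" using hc unfolding summable_on_def by blast
  have sm: "(\<lambda>j. (\<theta> j)\<^sup>2) summable_on {J+1..}"
    using hcs ck by (rule summable_on_comparison_test[of c]) simp_all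
  have "(\<Sum>\<^sub>\<infinity>j\<in>{J+1..}. (\<theta> j)\<^sup>2) \<le> infsum c {J+1..}"
    using sm hcs ck by (rule infsum_mono) simp_all
  also have "\<dots> = A\<^sup>2/p * real J powr (-p)" by (rule infsumI[OF hc])
  finally have "(\<Sum>\<^sub>\<infinity>j\<in>{J+1..}. (\<theta> j)\<^sup>2) \<le> A\<^sup>2/p * real J powr (-p)" .
  moreover have "-p = -2*k+1" "p = 2*k-1" by (simp_all add: p_def)
  ultimately show ?thesis by (simp only:)
qed

lemma coeff_bounded:
  assumes "orthonormal_basis_L2 M \<phi>" "f \<in> L2 M" "i \<ge> 1"
  shows "\<bar>coeff M \<phi> f i\<bar> \<le> ((LINT x|M. (f x)\<^sup>2) + 1) / 2"
proof -
  have phi: "\<phi> i \<in> L2 M" and one: "(LINT x|M. \<phi> i x * \<phi> i x) = 1"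
    using assms unfolding orthonormal_basis_L2_def by auto
  have fm: "f \<in> borel_measurable M" "integrable M (\<lambda>x. (f x)\<^sup>2)" using assms(2) unfolding L2_def by auto
  have pm: "\<phi> i \<in> borel_measurable M" "integrable M (\<lambda>x. (\<phi> i x)\<^sup>2)" using phi unfolding L2_def by auto
  have pt: "\<bar>f x * \<phi> i x\<bar> \<le> ((f x)\<^sup>2 + (\<phi> i x)\<^sup>2) / 2" for x
  proof -
    have "0 \<le> (\<bar>f x\<bar> - \<bar>\<phi> i x\<bar>)\<^sup>2" by simp
    then show ?thesis by (simp add: power2_eq_square algebra_simps abs_mult)
  qed
  have ig: "integrable M (\<lambda>x. ((f x)\<^sup>2 + (\<phi> i x)\<^sup>2) / 2)"
    using fm pm by simp
  have ifp: "integrable M (\<lambda>x. f x * \<phi> i x)"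
  proof (rule Bochner_Integration.integrable_bound[OF ig])
    show "(\<lambda>x. f x * \<phi> i x) \<in> borel_measurable M" using fm(1) pm(1) by measurable
    show "AE x in M. norm (f x * \<phi> i x) \<le> norm (((f x)\<^sup>2 + (\<phi> i x)\<^sup>2) / 2)"
      using pt by (intro AE_I2) (auto intro: order_trans)
  qed
  have "\<bar>coeff M \<phi> f i\<bar> \<le> (LINT x|M. ((f x)\<^sup>2 + (\<phi> i x)\<^sup>2) / 2)"
    unfolding coeff_def using ifp ig pt by (rule integral_abs_bound_integral)
  also have "\<dots> = ((LINT x|M. (f x)\<^sup>2) + (LINT x|M. (\<phi> i x)\<^sup>2)) / 2"
    using fm pm by simp
  also have "(LINT x|M. (\<phi> i x)\<^sup>2) = 1" using one by (simp add: power2_eq_square)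
  finally show ?thesis .
qed

theorem lemma2:
  fixes M :: "real measure" and \<phi> :: "nat \<Rightarrow> real \<Rightarrow> real" and k A C :: real
  assumes "space M = {0..1}"
    and "sets M = sets (restrict_space borel {0..1::real})"
    and "orthonormal_basis_L2 M \<phi>"
    and "A > 0" and "k > 1/2" and "C \<ge> A\<^sup>2 / (2*k - 1)"
  shows "Ecal M \<phi> k A \<subseteq> Theta M \<phi> k A C \<and> Theta M \<phi> k A C \<subseteq> Acal M \<phi> k A C"
proof
  show "Ecal M \<phi> k A \<subseteq> Theta M \<phi> k A C"
  proof
    fix f assume fE: "f \<in> Ecal M \<phi> k A"
    define \<theta> where "\<theta> = coeff M \<phi> f"
    have L: "f \<in> L2 M" and b: "\<And>j. j \<ge> 1 \<Longrightarrow> \<bar>\<theta> j\<bar> \<le> A * real j powr (-k)"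
      using fE unfolding Ecal_def \<theta>_def by auto
    have r: "rearr \<theta> j \<le> A * real j powr (-k)" if j: "j \<ge> 1" for j
    proof -
      define t where "t = A * real j powr (-k)"
      have t0: "t \<ge> 0" unfolding t_def using assms(4) by simp
      have sub: "{i. 1 \<le> i \<and> t < \<bar>\<theta> i\<bar>} \<subseteq> {1..<j}"
      proof
        fix i assume i: "i \<in> {i. 1 \<le> i \<and> t < \<bar>\<theta> i\<bar>}"
        then have "t < A * real i powr (-k)" using b[of i] by auto
        then have "real j powr (-k) < real i powr (-k)" unfolding t_def using assms(4) by simp
        then have "\<not> (real j \<le> real i)"
          using i j assms(5) powr_mono2'[of "-k" "real j" "real i"] by auto
        then show "i \<in> {1..<j}" using i by auto
      qed
      have fin: "finite {i. 1 \<le> i \<and> t < \<bar>\<theta> i\<bar>}" using sub finite_subset by blast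
      have "card {i. 1 \<le> i \<and> t < \<bar>\<theta> i\<bar>} \<le> card {1..<j}" using sub by (intro card_mono) auto
      then have "card {i. 1 \<le> i \<and> t < \<bar>\<theta> i\<bar>} < j" using j by simp
      then have mem: "t \<in> {t. 0 \<le> t \<and> finite {i. 1 \<le> i \<and> t < \<bar>\<theta> i\<bar>}
                        \<and> card {i. 1 \<le> i \<and> t < \<bar>\<theta> i\<bar>} < j}" using t0 fin by blast
      show ?thesis unfolding rearr_def t_def[symmetric]
        by (rule cInf_lower[OF mem]) (rule bdd_belowI[of _ 0], blast)
    qed
    have tl: "tail_sq \<theta> J \<le> C * real J powr (-2*k+1)" if J: "J \<ge> 1" for J
    proof -
      have "tail_sq \<theta> J \<le> A\<^sup>2/(2*k-1) * real J powr (-2*k+1)"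
        unfolding tail_sq_def using tail_bound[OF assms(4) assms(5) J b] by simp
      also have "\<dots> \<le> C * real J powr (-2*k+1)"
        using assms(6) by (intro mult_right_mono) auto
      finally show ?thesis .
    qed
    show "f \<in> Theta M \<phi> k A C" unfolding Theta_def using L r tl \<theta>_def by auto
  qed
next
  show "Theta M \<phi> k A C \<subseteq> Acal M \<phi> k A C"
  proof
    fix f assume fT: "f \<in> Theta M \<phi> k A C"
    define \<theta> where "\<theta> = coeff M \<phi> f"
    have L: "f \<in> L2 M" and r1: "rearr \<theta> 1 \<le> A"
      and tl: "\<forall>J\<ge>1. tail_sq \<theta> J \<le> C * real J powr (-2*k+1)"
      using fT unfolding Theta_def \<theta>_def by auto
    define S where "S = {t. 0 \<le> t \<and> finite {i. 1 \<le> i \<and> t < \<bar>\<theta> i\<bar>}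
                        \<and> card {i. 1 \<le> i \<and> t < \<bar>\<theta> i\<bar>} < (1::nat)}"
    define B where "B = ((LINT x|M. (f x)\<^sup>2) + 1) / 2"
    have bB: "\<bar>\<theta> i\<bar> \<le> B" if "i \<ge> 1" for i
      unfolding \<theta>_def B_def using coeff_bounded[OF assms(3) L that] .
    have B0: "B \<ge> 0" using bB[of 1] by simp
    have E: "{i. 1 \<le> i \<and> B < \<bar>\<theta> i\<bar>} = {}" using bB by force
    have "B \<in> S" unfolding S_def mem_Collect_eq E using B0 by simp
    then have ne: "S \<noteq> {}" by blast
    have lb: "\<bar>\<theta> 1\<bar> \<le> t" if "t \<in> S" for t
    proof (rule ccontr)
      assume "\<not> \<bar>\<theta> 1\<bar> \<le> t"
      then have "1 \<in> {i. 1 \<le> i \<and> t < \<bar>\<theta> i\<bar>}" by simp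
      moreover have "finite {i. 1 \<le> i \<and> t < \<bar>\<theta> i\<bar>}" "card {i. 1 \<le> i \<and> t < \<bar>\<theta> i\<bar>} = 0"
        using that unfolding S_def by auto
      ultimately show False by simp
    qed
    have "\<bar>\<theta> 1\<bar> \<le> Inf S" using ne lb by (rule cInf_greatest)
    also have "Inf S = rearr \<theta> 1" unfolding S_def rearr_def ..
    finally have "\<bar>\<theta> 1\<bar> \<le> A" using r1 by simp
    then show "f \<in> Acal M \<phi> k A C" unfolding Acal_def using L tl \<theta>_def by auto
  qed
qed

end
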